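(* Let $G$ be a disjoint union of finitely many spectrally threshold dominated graphs, with $G$ having $n$ nodes and $m$ edges, and let $k\in\{1,\dots,n\}$. Then there is a threshold graph $T$ on $n$ nodes with $m$ edges such that $\sum_{i=1}^k\lambda_i(T)\ge\sum_{i=1}^k\lambda_i(G)$.
   Context: All graphs are finite and simple. For a graph $G$ on $n$ nodes, the Laplacian eigenvalues (eigenvalues of $L(G)=D(G)-A(G)$) are $\lambda_1(G)\ge\dots\ge\lambda_n(G)=0$. A threshold graph is a graph obtainable from the empty graph by repeatedly adding a new node that is either isolated or adjacent to all previously added nodes. A graph $G$ on $n$ nodes with $m$ edges is spectrally threshold dominated if for each $k\in\{1,\dots,n\}$ there is a threshold graph $T_k$ on $n$ nodes with $m$ edges satisfying $\sum_{i=1}^k\lambda_i(T_k)\ge\sum_{i=1}^k\lambda_i(G)$. *)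

theory Defs
  imports "Jordan_Normal_Form.Char_Poly"
begin

text \<open>A (finite, simple) graph on n nodes is represented by its node count n and an
  edge relation E on the node set {0..<n}.\<close>

type_synonym graph = "nat \<times> (nat \<Rightarrow> nat \<Rightarrow> bool)"

definition simple_graph :: "nat \<Rightarrow> (nat \<Rightarrow> nat \<Rightarrow> bool) \<Rightarrow> bool" where
  "simple_graph n E \<longleftrightarrow> (\<forall>i j. E i j \<longrightarrow> i < n \<and> j < n \<and> i \<noteq> j \<and> E j i)"

definition num_edges :: "nat \<Rightarrow> (nat \<Rightarrow> nat \<Rightarrow> bool) \<Rightarrow> nat" where
  "num_edges n E = card {(i, j). i < j \<and> j < n \<and> E i j}"

definition degree_of :: "nat \<Rightarrow> (nat \<Rightarrow> nat \<Rightarrow> bool) \<Rightarrow> nat \<Rightarrow> nat" where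
  "degree_of n E i = card {j. j < n \<and> E i j}"

definition laplacian :: "nat \<Rightarrow> (nat \<Rightarrow> nat \<Rightarrow> bool) \<Rightarrow> real mat" where
  "laplacian n E = mat n n (\<lambda>(i, j). (if i = j then real (degree_of n E i) else 0)
                                     - (if E i j then 1 else 0))"

text \<open>Laplacian eigenvalues (roots of the characteristic polynomial, with multiplicity),
  sorted non-increasingly: lap_eigs n E ! (i - 1) is lambda_i.\<close>
definition lap_eigs :: "nat \<Rightarrow> (nat \<Rightarrow> nat \<Rightarrow> bool) \<Rightarrow> real list" where
  "lap_eigs n E = rev (sorted_list_of_multiset (proots (char_poly (laplacian n E))))"

definition lap_eig :: "nat \<Rightarrow> (nat \<Rightarrow> nat \<Rightarrow> bool) \<Rightarrow> nat \<Rightarrow> real" where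
  "lap_eig n E i = lap_eigs n E ! (i - 1)"

definition lap_sum :: "nat \<Rightarrow> (nat \<Rightarrow> nat \<Rightarrow> bool) \<Rightarrow> nat \<Rightarrow> real" where
  "lap_sum n E k = (\<Sum>i = 1..k. lap_eig n E i)"

inductive threshold :: "nat \<Rightarrow> (nat \<Rightarrow> nat \<Rightarrow> bool) \<Rightarrow> bool" where
  empty: "threshold 0 (\<lambda>_ _. False)"
| add_isolated: "threshold n E \<Longrightarrow> threshold (Suc n) E"
| add_dominating: "threshold n E \<Longrightarrow>
     threshold (Suc n) (\<lambda>i j. E i j \<or> (i = n \<and> j < n) \<or> (j = n \<and> i < n))"

definition spectrally_threshold_dominated :: "nat \<Rightarrow> (nat \<Rightarrow> nat \<Rightarrow> bool) \<Rightarrow> bool" where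
  "spectrally_threshold_dominated n E \<longleftrightarrow>
     (\<forall>k \<in> {1..n}. \<exists>T. threshold n T \<and> num_edges n T = num_edges n E \<and>
                         lap_sum n T k \<ge> lap_sum n E k)"

definition disj_union :: "graph \<Rightarrow> graph \<Rightarrow> graph" where
  "disj_union G H = (fst G + fst H,
     (\<lambda>i j. (i < fst G \<and> j < fst G \<and> snd G i j) \<or>
            (fst G \<le> i \<and> fst G \<le> j \<and> snd H (i - fst G) (j - fst G))))"

definition disj_union_list :: "graph list \<Rightarrow> graph" where
  "disj_union_list Gs = foldr disj_union Gs (0, (\<lambda>_ _. False))"

definition graph_iso :: "graph \<Rightarrow> graph \<Rightarrow> bool" where
  "graph_iso G H \<longleftrightarrow> fst G = fst H \<and>
     (\<exists>p. bij_betw p {0..<fst G} {0..<fst H} \<and>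
          (\<forall>i < fst G. \<forall>j < fst G. snd G i j \<longleftrightarrow> snd H (p i) (p j)))"

end

theory Submission
  imports Defs
begin


fun Fk :: "nat \<Rightarrow> nat list \<Rightarrow> nat" where
  "Fk 0 cs = 0"
| "Fk (Suc k) [] = 0"
| "Fk (Suc k) (c # cs) = c + min c (Suc k) + Fk k cs"

fun addl :: "nat list \<Rightarrow> nat list \<Rightarrow> nat list" where
  "addl [] ys = ys"
| "addl xs [] = xs"
| "addl (x # xs) (y # ys) = (x + y) # addl xs ys"

definition valid :: "nat \<Rightarrow> nat list \<Rightarrow> bool" where
  "valid n cs \<longleftrightarrow> sorted_wrt (>) cs \<and> (\<forall>c\<in>set cs. 0 < c \<and> c < n)"

lemma Fk_Nil[simp]: "Fk k [] = 0"
  by (cases k) auto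

lemma Fk_mono_k: "k \<le> k' \<Longrightarrow> Fk k cs \<le> Fk k' cs"
proof (induction cs arbitrary: k k')
  case Nil then show ?case by simp
next
  case (Cons c cs)
  show ?case
  proof (cases k)
    case 0 then show ?thesis by simp
  next
    case (Suc j)
    with Cons.prems obtain j' where k': "k' = Suc j'" "j \<le> j'" by (cases k') auto
    with Cons.IH[of j j'] Suc show ?thesis by simp
  qed
qed

lemma Fk_mono_l1: "Fk k ys \<le> Fk k (addl xs ys)"
proof (induction xs ys arbitrary: k rule: addl.induct)
  case (3 x xs y ys)
  show ?case
  proof (cases k)
    case (Suc j)
    have "Fk j ys \<le> Fk j (addl xs ys)" by (rule 3)
    moreover have "min y (Suc j) \<le> min (x+y) (Suc j)" by simp
    ultimately show ?thesis using Suc by simp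
  qed simp
qed auto

lemma Fk_mono_l2: "Fk k xs \<le> Fk k (addl xs ys)"
proof (induction xs ys arbitrary: k rule: addl.induct)
  case (3 x xs y ys)
  show ?case
  proof (cases k)
    case (Suc j)
    have "Fk j xs \<le> Fk j (addl xs ys)" by (rule 3)
    moreover have "min x (Suc j) \<le> min (x+y) (Suc j)" by simp
    ultimately show ?thesis using Suc by simp
  qed simp
qed auto

lemma Fk_super: "Fk k1 xs + Fk k2 ys \<le> Fk (k1 + k2) (addl xs ys)"
proof (induction xs ys arbitrary: k1 k2 rule: addl.induct)
  case (1 ys)
  then show ?case using Fk_mono_k[of k2 "k1+k2" ys] by simp
next
  case (2 x xs)
  then show ?case using Fk_mono_k[of k1 "k1+k2" "x#xs"] by simp
next
  case (3 x xs y ys)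
  show ?case
  proof (cases k1)
    case 0
    then show ?thesis using Fk_mono_l1[of k2 "y#ys" "x#xs"] by simp
  next
    case (Suc j1)
    show ?thesis
    proof (cases k2)
      case 0
      then show ?thesis using Fk_mono_l2[of k1 "x#xs" "y#ys"] by simp
    next
      case (Suc j2)
      have ih: "Fk j1 xs + Fk j2 ys \<le> Fk (j1 + j2) (addl xs ys)" by (rule 3)
      have m: "Fk (j1 + j2) (addl xs ys) \<le> Fk (Suc (j1 + j2)) (addl xs ys)"
        by (rule Fk_mono_k) simp
      have mm: "min x (Suc j1) + min y (Suc j2) \<le> min (x + y) (Suc (Suc (j1 + j2)))"
        by (auto simp: min_def)
      have "k1 + k2 = Suc (Suc (j1 + j2))" using \<open>k1 = Suc j1\<close> Suc by simp
      then show ?thesis using \<open>k1 = Suc j1\<close> Suc ih m mm by simp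
    qed
  qed
qed

lemma sum_addl: "sum_list (addl xs ys) = sum_list xs + sum_list ys"
  by (induction xs ys rule: addl.induct) auto

lemma addl_bound: "(\<forall>a\<in>set xs. a < x) \<Longrightarrow> (\<forall>b\<in>set ys. b < y) \<Longrightarrow> z \<in> set (addl xs ys) \<Longrightarrow> z < x + y"
proof (induction xs ys rule: addl.induct)
  case (1 ys) then show ?case by fastforce
next
  case (2 v va) then show ?case by fastforce
next
  case (3 x' xs y' ys)
  show ?case
  proof (cases "z = x' + y'")
    case True then show ?thesis using 3(2,3) by (simp add: add_strict_mono)
  next
    case False then show ?thesis using 3 by simp
  qed
qed

lemma addl_range: "(\<forall>a\<in>set xs. 0 < a \<and> a < n1) \<Longrightarrow> (\<forall>b\<in>set ys. 0 < b \<and> b < n2) \<Longrightarrow>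
   z \<in> set (addl xs ys) \<Longrightarrow> 0 < z \<and> z < n1 + n2"
  by (induction xs ys arbitrary: z rule: addl.induct) auto

lemma sorted_addl: "sorted_wrt (>) xs \<Longrightarrow> sorted_wrt (>) ys \<Longrightarrow> sorted_wrt (>) (addl xs ys)"
proof (induction xs ys rule: addl.induct)
  case (3 x xs y ys)
  then show ?case using addl_bound[of xs x ys y] by auto
qed auto

lemma valid_addl: assumes "valid n1 xs" "valid n2 ys" shows "valid (n1 + n2) (addl xs ys)"
proof -
  have "sorted_wrt (>) (addl xs ys)" using assms unfolding valid_def by (intro sorted_addl) auto
  moreover have "\<forall>z\<in>set (addl xs ys). 0 < z \<and> z < n1 + n2"
  proof
    fix z assume "z \<in> set (addl xs ys)"
    then show "0 < z \<and> z < n1 + n2" using assms unfolding valid_def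
      by (intro addl_range[of xs n1 ys n2 z]) auto
  qed
  ultimately show ?thesis unfolding valid_def by blast
qed

lemma Fk_full: "valid n cs \<Longrightarrow> n \<le> k \<Longrightarrow> Fk k cs = 2 * sum_list cs"
proof (induction cs arbitrary: n k)
  case Nil then show ?case by simp
next
  case (Cons c cs)
  then have c: "0 < c" "c < n" and v: "valid c cs" unfolding valid_def by auto
  obtain k' where k: "k = Suc k'" using Cons.prems c by (cases k) auto
  have "c \<le> k'" using c k Cons.prems by simp
  then have "Fk k' cs = 2 * sum_list cs" using Cons.IH[OF v] by simp
  then show ?case using k \<open>c \<le> k'\<close> by simp
qed

fun eigsL :: "nat \<Rightarrow> nat list \<Rightarrow> nat list" where
  "eigsL 0 cs = []"
| "eigsL (Suc n) cs = (if cs \<noteq> [] \<and> hd cs = n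
      then Suc n # map Suc (butlast (eigsL n (tl cs))) @ [0]
      else eigsL n cs @ [0])"

declare eigsL.simps(2)[simp del]

lemma valid_dom: "valid (Suc n) cs \<Longrightarrow> cs \<noteq> [] \<Longrightarrow> hd cs = n \<Longrightarrow> valid n (tl cs) \<and> 0 < n"
  unfolding valid_def by (cases cs) auto

lemma valid_iso: "valid (Suc n) cs \<Longrightarrow> \<not> (cs \<noteq> [] \<and> hd cs = n) \<Longrightarrow> valid n cs"
  unfolding valid_def
proof (cases cs)
  case (Cons c cs')
  assume a: "sorted_wrt (>) cs \<and> (\<forall>c\<in>set cs. 0 < c \<and> c < Suc n)" "\<not> (cs \<noteq> [] \<and> hd cs = n)"
  then have "c < n" using Cons by auto
  then show "sorted_wrt (>) cs \<and> (\<forall>c\<in>set cs. 0 < c \<and> c < n)" using a Cons by auto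
qed auto

lemma eigsL_props: "valid n cs \<Longrightarrow> length (eigsL n cs) = n \<and> sorted_wrt (\<ge>) (eigsL n cs) \<and>
   (\<forall>e\<in>set (eigsL n cs). e \<le> n) \<and> (\<forall>k\<le>n. sum_list (take k (eigsL n cs)) = Fk k cs)"
proof (induction n arbitrary: cs)
  case 0 then show ?case by simp
next
  case (Suc n)
  show ?case
  proof (cases "cs \<noteq> [] \<and> hd cs = n")
    case True
    from valid_dom[OF Suc.prems] True have v: "valid n (tl cs)" and np: "0 < n" by auto
    define E where "E = eigsL n (tl cs)"
    from Suc.IH[OF v] have len: "length E = n" and so: "sorted_wrt (\<ge>) E"
      and bd: "\<forall>e\<in>set E. e \<le> n" and sm: "\<forall>k\<le>n. sum_list (take k E) = Fk k (tl cs)"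
      unfolding E_def by auto
    have lastE: "last E = 0"
    proof -
      obtain m where "n = Suc m" using np by (cases n) auto
      then show ?thesis unfolding E_def by (simp add: eigsL.simps)
    qed
    have cs: "cs = n # tl cs" using True by (cases cs) auto
    have eq: "eigsL (Suc n) cs = Suc n # map Suc (butlast E) @ [0]" using True E_def by (simp add: eigsL.simps)
    have sob: "sorted_wrt (\<ge>) (butlast E)" using so
      by (metis butlast_conv_take sorted_wrt_take)
    have bdb: "\<forall>e\<in>set (butlast E). e \<le> n" using bd by (meson in_set_butlastD)
    have p1: "length (eigsL (Suc n) cs) = Suc n" using eq len np by simp
    have p2: "sorted_wrt (\<ge>) (eigsL (Suc n) cs)" unfolding eq
      using sob bdb by (auto simp: sorted_wrt_append sorted_wrt_map)
    have p3: "\<forall>e\<in>set (eigsL (Suc n) cs). e \<le> Suc n" unfolding eq using bdb by auto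
    have p4: "sum_list (take k (eigsL (Suc n) cs)) = Fk k cs" if k: "k \<le> Suc n" for k
    proof (cases k)
      case 0 then show ?thesis by simp
    next
      case (Suc k')
      have Fk: "Fk k cs = n + min n k + Fk k' (tl cs)"
        using Suc by (subst cs) simp
      show ?thesis
      proof (cases "k' \<le> n - 1")
        case True
        have tb: "take k' (butlast E) = take k' E"
          using True len np by (simp add: take_butlast)
        have "take k (eigsL (Suc n) cs) = Suc n # map Suc (take k' E)"
          unfolding eq Suc using True len np tb[symmetric]
          by (simp add: take_map)
        moreover have "sum_list (Suc n # map Suc (take k' E)) = Suc n + k' + sum_list (take k' E)"
          using True len np by (simp add: sum_list_Suc)
        ultimately have "sum_list (take k (eigsL (Suc n) cs)) = Suc n + k' + sum_list (take k' E)"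
          by simp
        moreover have "Suc k' \<le> n" using True np by simp
        ultimately show ?thesis using Fk sm Suc by (simp add: min_def)
      next
        case False
        then have k'n: "k' = n" using k Suc by simp
        have "take k (eigsL (Suc n) cs) = eigsL (Suc n) cs" using p1 Suc k'n by simp
        then have "sum_list (take k (eigsL (Suc n) cs)) = Suc n + ((n - 1) + sum_list (butlast E))"
          unfolding eq using len by (simp add: sum_list_Suc)
        moreover have "sum_list E = sum_list (butlast E)"
          using lastE len np
          by (metis add.right_neutral append_butlast_last_id list.size(3) less_numeral_extra(3) sum_list_append sum_list.Cons sum_list.Nil)
        moreover have "sum_list E = Fk n (tl cs)" using sm len by (metis order_refl take_all)
        ultimately show ?thesis using Fk k'n Suc np by simp
      qed
    qed
    show ?thesis using p1 p2 p3 p4 by blast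
  next
    case False
    have v: "valid n cs" by (rule valid_iso[OF Suc.prems False])
    define E where "E = eigsL n cs"
    from Suc.IH[OF v] have len: "length E = n" and so: "sorted_wrt (\<ge>) E"
      and bd: "\<forall>e\<in>set E. e \<le> n" and sm: "\<forall>k\<le>n. sum_list (take k E) = Fk k cs"
      unfolding E_def by auto
    have eq: "eigsL (Suc n) cs = E @ [0]" using False E_def by (auto simp: eigsL.simps)
    have p4: "sum_list (take k (eigsL (Suc n) cs)) = Fk k cs" if k: "k \<le> Suc n" for k
    proof (cases "k \<le> n")
      case True then show ?thesis unfolding eq using sm len by simp
    next
      case False
      then have "k = Suc n" using k by simp
      then have "sum_list (take k (eigsL (Suc n) cs)) = sum_list E" unfolding eq using len by simp
      also have "\<dots> = Fk n cs" using sm len by (metis order_refl take_all)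
      also have "\<dots> = Fk k cs" using Fk_full[OF v, of n] Fk_full[OF v, of k] \<open>k = Suc n\<close> by simp
      finally show ?thesis .
    qed
    show ?thesis using len so bd p4 unfolding eq by (auto simp: sorted_wrt_append)
  qed
qed


definition thrL :: "nat \<Rightarrow> nat list \<Rightarrow> nat \<Rightarrow> nat \<Rightarrow> bool" where
  "thrL n cs i j \<longleftrightarrow> i < n \<and> j < n \<and> i \<noteq> j \<and> max i j \<in> set cs"

lemma thrL_iso: "\<forall>c\<in>set cs. c < n \<Longrightarrow> thrL (Suc n) cs = thrL n cs"
  unfolding thrL_def by (intro ext) (auto simp: max_def less_Suc_eq)

lemma thrL_dom: "\<forall>c\<in>set cs. c < n \<Longrightarrow>
   thrL (Suc n) (n # cs) = (\<lambda>i j. thrL n cs i j \<or> (i = n \<and> j < n) \<or> (j = n \<and> i < n))"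
  unfolding thrL_def by (intro ext) (auto simp: max_def less_Suc_eq)

lemma thr_rep: "threshold n T \<Longrightarrow> \<exists>cs. valid n cs \<and> T = thrL n cs"
proof (induction rule: threshold.induct)
  case empty
  show ?case by (rule exI[of _ "[]"]) (auto simp: valid_def thrL_def)
next
  case (add_isolated n E)
  then obtain cs where v: "valid n cs" and E: "E = thrL n cs" by blast
  have "valid (Suc n) cs" using v unfolding valid_def by auto
  moreover have "thrL (Suc n) cs = E" using E thrL_iso v unfolding valid_def by auto
  ultimately show ?case by (intro exI[of _ cs]) simp
next
  case (add_dominating n E)
  then obtain cs where v: "valid n cs" and E: "E = thrL n cs" by blast
  show ?case
  proof (cases "n = 0")
    case True
    have "valid (Suc n) cs" using v unfolding valid_def by auto
    moreover have "(\<lambda>i j. E i j \<or> i = n \<and> j < n \<or> j = n \<and> i < n) = E" using True by simp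
    moreover have "thrL (Suc n) cs = E"
      using E thrL_iso v unfolding valid_def by auto
    ultimately show ?thesis by (intro exI[of _ cs]) simp
  next
    case False
    have "valid (Suc n) (n # cs)" using v False unfolding valid_def by auto
    moreover have "thrL (Suc n) (n # cs) = (\<lambda>i j. E i j \<or> i = n \<and> j < n \<or> j = n \<and> i < n)"
      using E thrL_dom v unfolding valid_def by auto
    ultimately show ?thesis by (intro exI[of _ "n # cs"]) simp
  qed
qed

lemma valid_lt: "valid n cs \<Longrightarrow> \<forall>c\<in>set cs. c < n"
  unfolding valid_def by auto

lemma thr_valid: "valid n cs \<Longrightarrow> threshold n (thrL n cs)"
proof (induction n arbitrary: cs)
  case 0
  then have "cs = []" unfolding valid_def by (cases cs) auto
  then have "thrL 0 cs = (\<lambda>_ _. False)" unfolding thrL_def by auto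
  then show ?case using threshold.empty by simp
next
  case (Suc n)
  show ?case
  proof (cases "cs \<noteq> [] \<and> hd cs = n")
    case True
    then obtain cs' where cs: "cs = n # cs'" by (cases cs) auto
    from valid_dom[OF Suc.prems] True have v: "valid n cs'" unfolding cs by auto
    have "threshold (Suc n) (\<lambda>i j. thrL n cs' i j \<or> (i = n \<and> j < n) \<or> (j = n \<and> i < n))"
      by (rule threshold.add_dominating[OF Suc.IH[OF v]])
    then show ?thesis unfolding cs thrL_dom[OF valid_lt[OF v]] .
  next
    case False
    have v: "valid n cs" by (rule valid_iso[OF Suc.prems False])
    show ?thesis using threshold.add_isolated[OF Suc.IH[OF v]] thrL_iso[OF valid_lt[OF v]] by simp
  qed
qed

lemma ne_iso: "\<forall>i j. E i j \<longrightarrow> i < n \<and> j < n \<Longrightarrow> num_edges (Suc n) E = num_edges n E"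
  unfolding num_edges_def
  by (rule arg_cong[of _ _ card]) (auto simp: less_Suc_eq)

lemma ne_dom: assumes "\<forall>i j. E i j \<longrightarrow> i < n \<and> j < n"
  shows "num_edges (Suc n) (\<lambda>i j. E i j \<or> (i = n \<and> j < n) \<or> (j = n \<and> i < n)) = num_edges n E + n"
proof -
  let ?A = "{(i, j). i < j \<and> j < n \<and> E i j}"
  let ?B = "(\<lambda>i. (i, n)) ` {..<n}"
  have eq: "{(i, j). i < j \<and> j < Suc n \<and> (E i j \<or> (i = n \<and> j < n) \<or> (j = n \<and> i < n))} = ?A \<union> ?B"
    using assms by (auto simp: less_Suc_eq)
  have fA: "finite ?A" by (rule finite_subset[of _ "{..<n} \<times> {..<n}"]) auto
  have dis: "?A \<inter> ?B = {}" by auto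
  have cB: "card ?B = n" by (subst card_image) (auto simp: inj_on_def)
  show ?thesis unfolding num_edges_def eq
    by (subst card_Un_disjoint) (use fA dis cB in auto)
qed

lemma ne_thr: "valid n cs \<Longrightarrow> num_edges n (thrL n cs) = sum_list cs"
proof (induction n arbitrary: cs)
  case 0
  then have "cs = []" unfolding valid_def by (cases cs) auto
  then show ?case unfolding num_edges_def by simp
next
  case (Suc n)
  have bnd: "\<forall>i j. thrL n cs' i j \<longrightarrow> i < n \<and> j < n" for cs' unfolding thrL_def by auto
  show ?case
  proof (cases "cs \<noteq> [] \<and> hd cs = n")
    case True
    then obtain cs' where cs: "cs = n # cs'" by (cases cs) auto
    from valid_dom[OF Suc.prems] True have v: "valid n cs'" unfolding cs by auto
    have "num_edges (Suc n) (thrL (Suc n) cs) = num_edges n (thrL n cs') + n"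
      unfolding cs thrL_dom[OF valid_lt[OF v]] by (rule ne_dom[OF bnd])
    also have "\<dots> = sum_list cs" using Suc.IH[OF v] unfolding cs by simp
    finally show ?thesis .
  next
    case False
    have v: "valid n cs" by (rule valid_iso[OF Suc.prems False])
    show ?thesis using thrL_iso[OF valid_lt[OF v]] ne_iso[OF bnd] Suc.IH[OF v] by simp
  qed
qed

lemma simple_thr: "simple_graph n (thrL n cs)"
  unfolding simple_graph_def thrL_def by (auto simp: max_def)


lemma poly_char_poly: assumes A: "(A :: real mat) \<in> carrier_mat n n"
  shows "poly (char_poly A) x = det (x \<cdot>\<^sub>m 1\<^sub>m n - A)"
proof -
  have "poly (char_poly A) x = det (- char_matrix A x)" by (rule char_poly_matrix[OF A])
  also have "- char_matrix A x = x \<cdot>\<^sub>m 1\<^sub>m n - A"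
    using A unfolding char_matrix_def by (intro eq_matI) auto
  finally show ?thesis .
qed

lemma poly_eqI_cofinite: fixes p q :: "real poly"
  assumes "\<And>x. x \<noteq> c \<Longrightarrow> poly p x = poly q x" shows "p = q"
proof (rule ccontr)
  assume "p \<noteq> q"
  then have "p - q \<noteq> 0" by simp
  then have "finite {x. poly (p - q) x = 0}" by (rule poly_roots_finite)
  moreover have "UNIV - {c} \<subseteq> {x. poly (p - q) x = 0}" using assms by auto
  moreover have "infinite (UNIV - {c} :: real set)"
    by (simp add: infinite_UNIV_char_0 Diff_infinite_finite)
  ultimately show False using finite_subset by blast
qed

lemma char_poly_block: assumes A: "(A :: real mat) \<in> carrier_mat n n" and B: "B \<in> carrier_mat m m"
  shows "char_poly (four_block_mat A (0\<^sub>m n m) (0\<^sub>m m n) B) = char_poly A * char_poly B"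
proof -
  have M: "four_block_mat A (0\<^sub>m n m) (0\<^sub>m m n) B \<in> carrier_mat (n + m) (n + m)"
    using A B by auto
  show ?thesis
  proof (rule poly_eqI_cofinite[where c=0])
    fix x :: real
    have eq: "x \<cdot>\<^sub>m 1\<^sub>m (n + m) - four_block_mat A (0\<^sub>m n m) (0\<^sub>m m n) B =
       four_block_mat (x \<cdot>\<^sub>m 1\<^sub>m n - A) (0\<^sub>m n m) (0\<^sub>m m n) (x \<cdot>\<^sub>m 1\<^sub>m m - B)"
      using A B by (intro eq_matI) (auto simp: index_mat_four_block)
    have "poly (char_poly (four_block_mat A (0\<^sub>m n m) (0\<^sub>m m n) B)) x
       = det (four_block_mat (x \<cdot>\<^sub>m 1\<^sub>m n - A) (0\<^sub>m n m) (0\<^sub>m m n) (x \<cdot>\<^sub>m 1\<^sub>m m - B))"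
      unfolding poly_char_poly[OF M] eq ..
    also have "\<dots> = det (x \<cdot>\<^sub>m 1\<^sub>m n - A) * det (x \<cdot>\<^sub>m 1\<^sub>m m - B)"
      by (rule det_four_block_mat_upper_right_zero) (use A B in auto)
    also have "\<dots> = poly (char_poly A * char_poly B) x"
      using poly_char_poly[OF A] poly_char_poly[OF B] by simp
    finally show "poly (char_poly (four_block_mat A (0\<^sub>m n m) (0\<^sub>m m n) B)) x = poly (char_poly A * char_poly B) x" .
  qed
qed

lemma lap_carrier[simp]: "laplacian n E \<in> carrier_mat n n"
  unfolding laplacian_def by simp

lemma lap_index: "i < n \<Longrightarrow> j < n \<Longrightarrow> laplacian n E $$ (i, j) =
   (if i = j then real (degree_of n E i) else 0) - (if E i j then 1 else 0)"
  unfolding laplacian_def by simp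

lemma lap_dims[simp]: "dim_row (laplacian n E) = n" "dim_col (laplacian n E) = n"
  unfolding laplacian_def by auto

lemma sum_indicator_card: "finite A \<Longrightarrow> (\<Sum>j\<in>A. (if P j then 1 else 0 :: real)) = real (card {j\<in>A. P j})"
  by (simp add: sum.If_cases Int_def)

lemma lap_rowsum: assumes "simple_graph n E" "i < n"
  shows "(\<Sum>j<n. laplacian n E $$ (i, j)) = 0"
proof -
  have "(\<Sum>j<n. laplacian n E $$ (i, j)) =
     (\<Sum>j<n. (if i = j then real (degree_of n E i) else 0) - (if E i j then 1 else 0))"
    by (rule sum.cong) (auto simp: lap_index assms(2))
  also have "\<dots> = (\<Sum>j<n. (if i = j then real (degree_of n E i) else 0)) - (\<Sum>j<n. (if E i j then 1 else 0))"
    by (simp add: sum_subtractf)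
  also have "(\<Sum>j<n. (if i = j then real (degree_of n E i) else 0)) = real (degree_of n E i)"
    using assms(2) by simp
  also have "(\<Sum>j<n. (if E i j then 1 else 0 :: real)) = real (card {j\<in>{..<n}. E i j})"
    by (rule sum_indicator_card) simp
  also have "{j\<in>{..<n}. E i j} = {j. j < n \<and> E i j}" by auto
  finally show ?thesis unfolding degree_of_def by simp
qed


lemma lap_iso: assumes bnd: "\<forall>i j. E i j \<longrightarrow> i < n \<and> j < n"
  shows "laplacian (Suc n) E = four_block_mat (laplacian n E) (0\<^sub>m n 1) (0\<^sub>m 1 n) (0\<^sub>m 1 1)"
proof -
  have deg: "degree_of (Suc n) E i = degree_of n E i" if "i < n" for i
    unfolding degree_of_def using bnd by (intro arg_cong[of _ _ card]) (auto simp: less_Suc_eq)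
  have degn: "degree_of (Suc n) E n = 0"
    unfolding degree_of_def using bnd by auto
  show ?thesis
  proof (rule eq_matI)
    fix i j assume ij: "i < dim_row (four_block_mat (laplacian n E) (0\<^sub>m n 1) (0\<^sub>m 1 n) (0\<^sub>m 1 1))"
      "j < dim_col (four_block_mat (laplacian n E) (0\<^sub>m n 1) (0\<^sub>m 1 n) (0\<^sub>m 1 1))"
    then have i: "i < Suc n" and j: "j < Suc n" by auto
    show "laplacian (Suc n) E $$ (i, j) = four_block_mat (laplacian n E) (0\<^sub>m n 1) (0\<^sub>m 1 n) (0\<^sub>m 1 1) $$ (i, j)"
      using i j bnd deg degn by (auto simp: lap_index index_mat_four_block less_Suc_eq)
  qed auto
qed

definition dom_ext :: "nat \<Rightarrow> (nat \<Rightarrow> nat \<Rightarrow> bool) \<Rightarrow> nat \<Rightarrow> nat \<Rightarrow> bool" where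
  "dom_ext n E = (\<lambda>i j. E i j \<or> (i = n \<and> j < n) \<or> (j = n \<and> i < n))"

lemma lap_dom: assumes G: "simple_graph n E"
  shows "laplacian (Suc n) (dom_ext n E) = four_block_mat (laplacian n E + 1\<^sub>m n)
     (mat n 1 (\<lambda>_. -1)) (mat 1 n (\<lambda>_. -1)) (mat 1 1 (\<lambda>_. real n))"
proof -
  have bnd: "\<forall>i j. E i j \<longrightarrow> i < n \<and> j < n" and irr: "\<And>i. \<not> E i i"
    using G unfolding simple_graph_def by auto
  have deg: "degree_of (Suc n) (dom_ext n E) i = Suc (degree_of n E i)" if "i < n" for i
  proof -
    have "{j. j < Suc n \<and> dom_ext n E i j} = insert n {j. j < n \<and> E i j}"
      using bnd that unfolding dom_ext_def by (auto simp: less_Suc_eq)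
    then show ?thesis unfolding degree_of_def by simp
  qed
  have degn: "degree_of (Suc n) (dom_ext n E) n = n"
  proof -
    have "{j. j < Suc n \<and> dom_ext n E n j} = {..<n}"
      using bnd unfolding dom_ext_def by (auto simp: less_Suc_eq)
    then show ?thesis unfolding degree_of_def by simp
  qed
  show ?thesis
  proof (rule eq_matI)
    fix i j assume ij: "i < dim_row (four_block_mat (laplacian n E + 1\<^sub>m n)
     (mat n 1 (\<lambda>_. -1)) (mat 1 n (\<lambda>_. -1)) (mat 1 1 (\<lambda>_. real n)))"
      "j < dim_col (four_block_mat (laplacian n E + 1\<^sub>m n)
     (mat n 1 (\<lambda>_. -1)) (mat 1 n (\<lambda>_. -1)) (mat 1 1 (\<lambda>_. real n)))"
    then have i: "i < Suc n" and j: "j < Suc n" by auto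
    show "laplacian (Suc n) (dom_ext n E) $$ (i, j) = four_block_mat (laplacian n E + 1\<^sub>m n)
     (mat n 1 (\<lambda>_. -1)) (mat 1 n (\<lambda>_. -1)) (mat 1 1 (\<lambda>_. real n)) $$ (i, j)"
      using i j bnd irr deg degn unfolding dom_ext_def
      by (auto simp: lap_index index_mat_four_block less_Suc_eq)
  qed auto
qed


lemma char_poly_dom:
  fixes es :: "real list"
  assumes G: "simple_graph n E" and cp: "char_poly (laplacian n E) = (\<Prod>e\<leftarrow>es. [:-e, 1:])"
    and les: "es \<noteq> []" and lst: "last es = 0"
  shows "char_poly (laplacian (Suc n) (dom_ext n E)) =
     [:0, 1:] * [:-(real n + 1), 1:] * (\<Prod>e\<leftarrow>butlast es. [:-(e + 1), 1:])"
proof (rule poly_eqI_cofinite[where c=1])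
  fix x :: real assume x1: "x \<noteq> 1"
  define L where "L = laplacian n E"
  define A where "A = (x - 1) \<cdot>\<^sub>m 1\<^sub>m n - L"
  define c where "c = mat n 1 (\<lambda>_. 1::real)"
  define r where "r = mat 1 n (\<lambda>_. 1::real)"
  define d where "d = mat 1 1 (\<lambda>_. x - real n)"
  define M where "M = four_block_mat A c r d"
  define Q where "Q = four_block_mat (1\<^sub>m n) (mat n 1 (\<lambda>_. -1)) (0\<^sub>m 1 n) (mat 1 1 (\<lambda>_. x - 1))"
  have L: "L \<in> carrier_mat n n" unfolding L_def by simp
  have A: "A \<in> carrier_mat n n" unfolding A_def using L by (rule minus_carrier_mat)
  have c: "c \<in> carrier_mat n 1" and r: "r \<in> carrier_mat 1 n" and d: "d \<in> carrier_mat 1 1"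
    unfolding c_def r_def d_def by auto
  have M: "M \<in> carrier_mat (n + 1) (n + 1)" unfolding M_def using A c r d by auto
  have Q: "Q \<in> carrier_mat (n + 1) (n + 1)" unfolding Q_def by auto
  have rowA: "(\<Sum>k<n. A $$ (i, k)) = x - 1" if i: "i < n" for i
  proof -
    have "(\<Sum>k<n. A $$ (i, k)) = (\<Sum>k<n. (if i = k then x - 1 else 0) - L $$ (i, k))"
      by (rule sum.cong) (use i L in \<open>auto simp: A_def\<close>)
    also have "\<dots> = (\<Sum>k<n. (if i = k then x - 1 else 0)) - (\<Sum>k<n. L $$ (i, k))"
      by (simp add: sum_subtractf)
    also have "(\<Sum>k<n. L $$ (i, k)) = 0" unfolding L_def by (rule lap_rowsum[OF G i])
    finally show ?thesis using i by simp
  qed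
  have Meq: "x \<cdot>\<^sub>m 1\<^sub>m (Suc n) - laplacian (Suc n) (dom_ext n E) = M"
    unfolding lap_dom[OF G]
  proof (rule eq_matI)
    fix i j assume "i < dim_row M" "j < dim_col M"
    then have i: "i < Suc n" and j: "j < Suc n" using M by auto
    show "(x \<cdot>\<^sub>m 1\<^sub>m (Suc n) - four_block_mat (laplacian n E + 1\<^sub>m n) (mat n 1 (\<lambda>_. - 1))
              (mat 1 n (\<lambda>_. - 1)) (mat 1 1 (\<lambda>_. real n))) $$ (i, j) = M $$ (i, j)"
      using i j L unfolding M_def A_def c_def r_def d_def L_def
      by (auto simp: index_mat_four_block less_Suc_eq)
  qed (use M in auto)
  have b1: "A * 1\<^sub>m n + c * 0\<^sub>m 1 n = A" using A c by simp
  have b2: "A * mat n 1 (\<lambda>_. -1) + c * mat 1 1 (\<lambda>_. x - 1) = 0\<^sub>m n 1"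
  proof (rule eq_matI)
    fix i j assume "i < dim_row (0\<^sub>m n 1 :: real mat)" "j < dim_col (0\<^sub>m n 1 :: real mat)"
    then have i: "i < n" and j: "j = 0" by auto
    have "(A * mat n 1 (\<lambda>_. -1)) $$ (i, j) = (\<Sum>k<n. A $$ (i, k) * (-1))"
      using A i j by (simp add: scalar_prod_def atLeast0LessThan)
    also have "\<dots> = - (x - 1)" using rowA[OF i] by (simp add: sum_negf)
    finally show "(A * mat n 1 (\<lambda>_. -1) + c * mat 1 1 (\<lambda>_. x - 1)) $$ (i, j) = 0\<^sub>m n 1 $$ (i, j)"
      using A c i j by (simp add: c_def scalar_prod_def)
  qed (use A c in auto)
  have b3: "r * 1\<^sub>m n + d * 0\<^sub>m 1 n = r" using r d by simp
  have b4: "r * mat n 1 (\<lambda>_. -1) + d * mat 1 1 (\<lambda>_. x - 1) = mat 1 1 (\<lambda>_. x * (x - real n - 1))"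
  proof (rule eq_matI)
    fix i j assume "i < dim_row (mat 1 1 (\<lambda>_. x * (x - real n - 1)))" "j < dim_col (mat 1 1 (\<lambda>_. x * (x - real n - 1)))"
    then have i: "i = 0" and j: "j = 0" by auto
    show "(r * mat n 1 (\<lambda>_. -1) + d * mat 1 1 (\<lambda>_. x - 1)) $$ (i, j) = mat 1 1 (\<lambda>_. x * (x - real n - 1)) $$ (i, j)"
      using i j r d by (simp add: r_def d_def scalar_prod_def algebra_simps)
  qed (use r d in auto)
  have MQ: "M * Q = four_block_mat A (0\<^sub>m n 1) r (mat 1 1 (\<lambda>_. x * (x - real n - 1)))"
  proof -
    have "M * Q = four_block_mat (A * 1\<^sub>m n + c * 0\<^sub>m 1 n)
      (A * mat n 1 (\<lambda>_. -1) + c * mat 1 1 (\<lambda>_. x - 1))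
      (r * 1\<^sub>m n + d * 0\<^sub>m 1 n) (r * mat n 1 (\<lambda>_. -1) + d * mat 1 1 (\<lambda>_. x - 1))"
      unfolding M_def Q_def by (rule mult_four_block_mat[OF A c r d]) auto
    then show ?thesis by (simp only: b1 b2 b3 b4)
  qed
  have detQ: "det Q = x - 1" unfolding Q_def
    by (subst det_four_block_mat_lower_left_zero[of _ n _ 1]) (auto simp: det_single)
  have detMQ: "det (M * Q) = det A * (x * (x - real n - 1))" unfolding MQ
    by (subst det_four_block_mat_upper_right_zero[of _ n _ 1]) (use A r in \<open>auto simp: det_single\<close>)
  have detA: "det A = poly (char_poly L) (x - 1)" unfolding A_def poly_char_poly[OF L] ..
  have es: "es = butlast es @ [0]" using les lst by (metis append_butlast_last_id)
  have pe: "poly (char_poly L) (x - 1) = (\<Prod>e\<leftarrow>butlast es. x - 1 - e) * (x - 1)"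
    unfolding L_def cp by (subst es) (simp add: poly_prod_list o_def)
  have "det M * (x - 1) = det (M * Q)" using det_mult[OF M Q] detQ by simp
  also have "\<dots> = (\<Prod>e\<leftarrow>butlast es. x - 1 - e) * (x * (x - real n - 1)) * (x - 1)"
    unfolding detMQ detA pe by (simp add: ac_simps)
  finally have e2: "det M = (\<Prod>e\<leftarrow>butlast es. x - 1 - e) * (x * (x - real n - 1))"
    using x1 by simp
  have e1: "poly (char_poly (laplacian (Suc n) (dom_ext n E))) x = det M"
    using poly_char_poly[OF lap_carrier[of "Suc n" "dom_ext n E"]] Meq by simp
  have e3: "poly ([:0, 1:] * [:-(real n + 1), 1:] * (\<Prod>e\<leftarrow>butlast es. [:-(e + 1), 1:])) x
     = x * (x - real n - 1) * (\<Prod>e\<leftarrow>butlast es. x - 1 - e)"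
    by (simp add: poly_prod_list o_def algebra_simps)
  show "poly (char_poly (laplacian (Suc n) (dom_ext n E))) x =
     poly ([:0, 1:] * [:-(real n + 1), 1:] * (\<Prod>e\<leftarrow>butlast es. [:-(e + 1), 1:])) x"
    unfolding e1 e2 e3 by (rule mult.commute)
qed


lemma char_poly_zero1: "char_poly (0\<^sub>m 1 1 :: real mat) = [:0, 1:]"
proof (rule poly_eqI_cofinite[where c=0])
  fix x :: real
  have "poly (char_poly (0\<^sub>m 1 1 :: real mat)) x = det (x \<cdot>\<^sub>m 1\<^sub>m 1 - 0\<^sub>m 1 1)"
    by (rule poly_char_poly) simp
  also have "\<dots> = x" by (subst det_single) auto
  finally show "poly (char_poly (0\<^sub>m 1 1 :: real mat)) x = poly [:0, 1:] x" by simp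
qed

lemma char_poly_dim0: "char_poly (laplacian 0 E) = 1"
  unfolding char_poly_def by (rule det_dim_zero) simp

lemma thrL_dom': "\<forall>c\<in>set cs. c < n \<Longrightarrow> thrL (Suc n) (n # cs) = dom_ext n (thrL n cs)"
  unfolding dom_ext_def by (rule thrL_dom)

lemma eigsL_last: "last (eigsL (Suc n) cs) = 0"
  by (simp add: eigsL.simps)

lemma cp_thr: "valid n cs \<Longrightarrow> char_poly (laplacian n (thrL n cs)) = (\<Prod>e\<leftarrow>eigsL n cs. [:- real e, 1:])"
proof (induction n arbitrary: cs)
  case 0 then show ?case by (simp add: char_poly_dim0)
next
  case (Suc n)
  have bnd: "\<forall>i j. thrL n cs' i j \<longrightarrow> i < n \<and> j < n" for cs' unfolding thrL_def by auto
  show ?case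
  proof (cases "cs \<noteq> [] \<and> hd cs = n")
    case True
    then obtain cs' where cs: "cs = n # cs'" by (cases cs) auto
    from valid_dom[OF Suc.prems] True have v: "valid n cs'" and np: "0 < n" unfolding cs by auto
    define E where "E = eigsL n cs'"
    have len: "length E = n" using eigsL_props[OF v] unfolding E_def by simp
    obtain m where m: "n = Suc m" using np by (cases n) auto
    have Ene: "E \<noteq> []" using len np by auto
    have lst: "last (map real E) = 0" using last_map[OF Ene, of real] eigsL_last[of m cs'] unfolding E_def m by simp
    have ne: "map real E \<noteq> []" using len np by auto
    have "char_poly (laplacian (Suc n) (thrL (Suc n) cs)) =
       [:0, 1:] * [:-(real n + 1), 1:] * (\<Prod>e\<leftarrow>butlast (map real E). [:-(e + 1), 1:])"
      unfolding cs thrL_dom'[OF valid_lt[OF v]]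
      by (rule char_poly_dom[OF simple_thr]) (use Suc.IH[OF v] ne lst in \<open>simp_all add: E_def o_def\<close>)
    also have "(\<Prod>e\<leftarrow>butlast (map real E). [:-(e + 1), 1:]) = (\<Prod>e\<leftarrow>map Suc (butlast E). [:- real e, 1:])"
    proof -
      have "map (\<lambda>e. [:-(e + 1), 1:]) (butlast (map real E)) = map (\<lambda>e. [:- real e, 1:]) (map Suc (butlast E))"
        unfolding map_butlast[symmetric] map_map by (rule map_cong[OF refl]) simp
      then show ?thesis by simp
    qed
    also have "eigsL (Suc n) cs = Suc n # map Suc (butlast E) @ [0]"
      unfolding cs E_def by (simp add: eigsL.simps)
    then have "(\<Prod>e\<leftarrow>eigsL (Suc n) cs. [:- real e, 1:]) = [:- real (Suc n), 1:] * (\<Prod>e\<leftarrow>map Suc (butlast E). [:- real e, 1:]) * [:0, 1:]"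
      by simp
    then have "[:0, 1:] * [:-(real n + 1), 1:] * (\<Prod>e\<leftarrow>map Suc (butlast E). [:- real e, 1:]) = (\<Prod>e\<leftarrow>eigsL (Suc n) cs. [:- real e, 1:])"
      by (simp add: algebra_simps)
    finally show ?thesis .
  next
    case False
    have v: "valid n cs" by (rule valid_iso[OF Suc.prems False])
    have "char_poly (laplacian (Suc n) (thrL (Suc n) cs)) = char_poly (laplacian n (thrL n cs)) * [:0, 1:]"
      unfolding thrL_iso[OF valid_lt[OF v]] lap_iso[OF bnd]
      by (subst char_poly_block) (auto simp: char_poly_zero1[simplified])
    also have "\<dots> = (\<Prod>e\<leftarrow>eigsL (Suc n) cs. [:- real e, 1:])"
    proof -
      have "eigsL (Suc n) cs = eigsL n cs @ [0]" using False by (auto simp: eigsL.simps)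
      then show ?thesis using Suc.IH[OF v] by simp
    qed
    finally show ?thesis .
  qed
qed


definition uE :: "nat \<Rightarrow> (nat \<Rightarrow> nat \<Rightarrow> bool) \<Rightarrow> (nat \<Rightarrow> nat \<Rightarrow> bool) \<Rightarrow> nat \<Rightarrow> nat \<Rightarrow> bool" where
  "uE n1 E1 E2 = (\<lambda>i j. (i < n1 \<and> j < n1 \<and> E1 i j) \<or> (n1 \<le> i \<and> n1 \<le> j \<and> E2 (i - n1) (j - n1)))"

lemma disj_union_eq: "disj_union (n1, E1) (n2, E2) = (n1 + n2, uE n1 E1 E2)"
  unfolding disj_union_def uE_def by simp

lemma simple_union: assumes A1: "simple_graph n1 E1" and A2: "simple_graph n2 E2"
  shows "simple_graph (n1 + n2) (uE n1 E1 E2)"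
  unfolding simple_graph_def
proof (intro allI impI)
  fix i j assume "uE n1 E1 E2 i j"
  then consider (a) "i < n1" "j < n1" "E1 i j" | (b) "n1 \<le> i" "n1 \<le> j" "E2 (i - n1) (j - n1)"
    unfolding uE_def by blast
  then show "i < n1 + n2 \<and> j < n1 + n2 \<and> i \<noteq> j \<and> uE n1 E1 E2 j i"
  proof cases
    case a
    from A1 a(3) have "E1 j i" "i \<noteq> j" unfolding simple_graph_def by blast+
    with a show ?thesis unfolding uE_def by auto
  next
    case b
    from A2 b(3) have "i - n1 < n2" "j - n1 < n2" "i - n1 \<noteq> j - n1" "E2 (j - n1) (i - n1)"
      unfolding simple_graph_def by blast+
    with b show ?thesis unfolding uE_def by auto
  qed
qed

lemma lap_union: assumes G1: "simple_graph n1 E1" and G2: "simple_graph n2 E2"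
  shows "laplacian (n1 + n2) (uE n1 E1 E2) =
    four_block_mat (laplacian n1 E1) (0\<^sub>m n1 n2) (0\<^sub>m n2 n1) (laplacian n2 E2)"
proof -
  have b1: "\<And>i j. E1 i j \<Longrightarrow> i < n1 \<and> j < n1" and b2: "\<And>i j. E2 i j \<Longrightarrow> i < n2 \<and> j < n2"
    using G1 G2 unfolding simple_graph_def by auto
  have d1: "degree_of (n1 + n2) (uE n1 E1 E2) i = degree_of n1 E1 i" if "i < n1" for i
  proof -
    have "{j. j < n1 + n2 \<and> uE n1 E1 E2 i j} = {j. j < n1 \<and> E1 i j}"
      using that unfolding uE_def by auto
    then show ?thesis unfolding degree_of_def by simp
  qed
  have d2: "degree_of (n1 + n2) (uE n1 E1 E2) i = degree_of n2 E2 (i - n1)" if "n1 \<le> i" for i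
  proof -
    have "{j. j < n1 + n2 \<and> uE n1 E1 E2 i j} = (\<lambda>j. j + n1) ` {j. j < n2 \<and> E2 (i - n1) j}"
    proof (intro equalityI subsetI)
      fix j assume "j \<in> {j. j < n1 + n2 \<and> uE n1 E1 E2 i j}"
      then have "j < n1 + n2" "n1 \<le> j" "E2 (i - n1) (j - n1)" using that unfolding uE_def by auto
      then show "j \<in> (\<lambda>j. j + n1) ` {j. j < n2 \<and> E2 (i - n1) j}"
        by (intro image_eqI[of _ _ "j - n1"]) auto
    next
      fix j assume "j \<in> (\<lambda>j. j + n1) ` {j. j < n2 \<and> E2 (i - n1) j}"
      then show "j \<in> {j. j < n1 + n2 \<and> uE n1 E1 E2 i j}" using that unfolding uE_def by auto
    qed
    then show ?thesis unfolding degree_of_def by (simp add: card_image)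
  qed
  show ?thesis
  proof (rule eq_matI)
    fix i j assume "i < dim_row (four_block_mat (laplacian n1 E1) (0\<^sub>m n1 n2) (0\<^sub>m n2 n1) (laplacian n2 E2))"
      "j < dim_col (four_block_mat (laplacian n1 E1) (0\<^sub>m n1 n2) (0\<^sub>m n2 n1) (laplacian n2 E2))"
    then have i: "i < n1 + n2" and j: "j < n1 + n2" by auto
    show "laplacian (n1 + n2) (uE n1 E1 E2) $$ (i, j) =
      four_block_mat (laplacian n1 E1) (0\<^sub>m n1 n2) (0\<^sub>m n2 n1) (laplacian n2 E2) $$ (i, j)"
    proof (cases "i < n1")
      case True
      then show ?thesis using i j d1[OF True]
        by (cases "j < n1") (auto simp: lap_index index_mat_four_block uE_def)
    next
      case False
      then show ?thesis using i j d2[of i]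
        by (cases "j < n1") (auto simp: lap_index index_mat_four_block uE_def)
    qed
  qed auto
qed

lemma cp_union: assumes "simple_graph n1 E1" "simple_graph n2 E2"
  shows "char_poly (laplacian (n1 + n2) (uE n1 E1 E2)) = char_poly (laplacian n1 E1) * char_poly (laplacian n2 E2)"
  unfolding lap_union[OF assms] by (rule char_poly_block) auto

lemma ne_union: assumes G1: "simple_graph n1 E1" and G2: "simple_graph n2 E2"
  shows "num_edges (n1 + n2) (uE n1 E1 E2) = num_edges n1 E1 + num_edges n2 E2"
proof -
  have b2: "\<And>i j. E2 i j \<Longrightarrow> i < n2 \<and> j < n2"
    using G2 unfolding simple_graph_def by auto
  let ?S1 = "{(i, j). i < j \<and> j < n1 \<and> E1 i j}"
  let ?T = "{(i, j). i < j \<and> j < n2 \<and> E2 i j}"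
  let ?f = "\<lambda>(i, j). (i + n1, j + n1)"
  have eq: "{(i, j). i < j \<and> j < n1 + n2 \<and> uE n1 E1 E2 i j} = ?S1 \<union> ?f ` ?T"
  proof (intro equalityI subsetI)
    fix x assume "x \<in> {(i, j). i < j \<and> j < n1 + n2 \<and> uE n1 E1 E2 i j}"
    then obtain i j where x: "x = (i, j)" "i < j" "j < n1 + n2" "uE n1 E1 E2 i j" by blast
    show "x \<in> ?S1 \<union> ?f ` ?T"
    proof (cases "i < n1 \<and> j < n1 \<and> E1 i j")
      case True then show ?thesis using x by auto
    next
      case False
      then have "n1 \<le> i" "n1 \<le> j" "E2 (i - n1) (j - n1)" using x unfolding uE_def by auto
      then have "(i - n1, j - n1) \<in> ?T" using x by auto
      moreover have "x = ?f (i - n1, j - n1)" using x \<open>n1 \<le> i\<close> \<open>n1 \<le> j\<close> by auto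
      ultimately show ?thesis by blast
    qed
  next
    fix x assume "x \<in> ?S1 \<union> ?f ` ?T"
    then show "x \<in> {(i, j). i < j \<and> j < n1 + n2 \<and> uE n1 E1 E2 i j}"
      unfolding uE_def by auto
  qed
  have fS: "finite ?S1" by (rule finite_subset[of _ "{..<n1} \<times> {..<n1}"]) auto
  have fT: "finite ?T" by (rule finite_subset[of _ "{..<n2} \<times> {..<n2}"]) auto
  have dis: "?S1 \<inter> ?f ` ?T = {}" by auto
  have inj: "inj_on ?f ?T" by (auto simp: inj_on_def)
  have "card (?S1 \<union> ?f ` ?T) = card ?S1 + card (?f ` ?T)"
    by (rule card_Un_disjoint) (use fS fT dis in auto)
  also have "card (?f ` ?T) = card ?T" by (rule card_image[OF inj])
  finally show ?thesis unfolding num_edges_def eq .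
qed


lemma sum_ind_l: "k < (n::nat) \<Longrightarrow> (\<Sum>a\<in>{0..<n}. (if a = k then 1 else 0) * (f a :: real)) = f k"
proof -
  assume k: "k < n"
  have "(\<Sum>a\<in>{0..<n}. (if a = k then 1 else 0) * f a) = (\<Sum>a\<in>{0..<n}. if k = a then f a else 0)"
    by (rule sum.cong) auto
  also have "\<dots> = f k" using k by (simp add: sum.delta')
  finally show ?thesis .
qed

lemma sum_ind_r: "k < (n::nat) \<Longrightarrow> (\<Sum>a\<in>{0..<n}. (f a :: real) * (if a = k then 1 else 0)) = f k"
proof -
  assume k: "k < n"
  have "(\<Sum>a\<in>{0..<n}. f a * (if a = k then 1 else 0)) = (\<Sum>a\<in>{0..<n}. if k = a then f a else 0)"
    by (rule sum.cong) auto
  also have "\<dots> = f k" using k by (simp add: sum.delta')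
  finally show ?thesis .
qed

lemma cp_iso: assumes bij: "bij_betw p {0..<n} {0..<n}"
  and rel: "\<forall>i<n. \<forall>j<n. E i j \<longleftrightarrow> F (p i) (p j)"
  shows "char_poly (laplacian n E) = char_poly (laplacian n F)"
proof -
  have pi: "\<And>i. i < n \<Longrightarrow> p i < n" using bij by (auto dest: bij_betwE)
  have inj: "inj_on p {0..<n}" using bij by (rule bij_betw_imp_inj_on)
  have surj: "p ` {0..<n} = {0..<n}" using bij by (rule bij_betw_imp_surj_on)
  have deg: "degree_of n F (p i) = degree_of n E i" if i: "i < n" for i
  proof -
    have "{j. j < n \<and> F (p i) j} = p ` {j. j < n \<and> E i j}"
    proof (intro equalityI subsetI)
      fix j assume j: "j \<in> {j. j < n \<and> F (p i) j}"
      then have "j \<in> p ` {0..<n}" using surj by auto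
      then obtain j' where j': "j' < n" "j = p j'" by auto
      then show "j \<in> p ` {j. j < n \<and> E i j}" using j rel i by auto
    next
      fix j assume "j \<in> p ` {j. j < n \<and> E i j}"
      then show "j \<in> {j. j < n \<and> F (p i) j}" using rel i pi by auto
    qed
    moreover have "inj_on p {j. j < n \<and> E i j}" by (rule inj_on_subset[OF inj]) auto
    ultimately show ?thesis unfolding degree_of_def by (simp add: card_image)
  qed
  have ent: "laplacian n F $$ (p i, p j) = laplacian n E $$ (i, j)" if "i < n" "j < n" for i j
  proof -
    have "p i = p j \<longleftrightarrow> i = j" using inj that by (auto dest: inj_onD)
    then show ?thesis using that pi rel deg by (simp add: lap_index)
  qed
  define P where "P = mat n n (\<lambda>(i, a). if a = p i then 1 else (0::real))"
  define Q where "Q = mat n n (\<lambda>(b, j). if b = p j then 1 else (0::real))"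
  have P: "P \<in> carrier_mat n n" and Q: "Q \<in> carrier_mat n n" unfolding P_def Q_def by auto
  have LF: "laplacian n F \<in> carrier_mat n n" and LE: "laplacian n E \<in> carrier_mat n n" by auto
  have PL: "(P * laplacian n F) $$ (i, b) = laplacian n F $$ (p i, b)" if "i < n" "b < n" for i b
    using that pi sum_ind_l[of "p i" n "\<lambda>a. laplacian n F $$ (a, b)"]
    by (simp add: P_def scalar_prod_def)
  have eqL: "laplacian n E = P * laplacian n F * Q"
  proof (rule eq_matI)
    fix i j assume "i < dim_row (P * laplacian n F * Q)" "j < dim_col (P * laplacian n F * Q)"
    then have i: "i < n" and j: "j < n" using P Q by auto
    have "(P * laplacian n F * Q) $$ (i, j) = (\<Sum>b\<in>{0..<n}. (P * laplacian n F) $$ (i, b) * (if b = p j then 1 else 0))"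
      using i j P Q by (simp add: Q_def scalar_prod_def)
    also have "\<dots> = (\<Sum>b\<in>{0..<n}. laplacian n F $$ (p i, b) * (if b = p j then 1 else 0))"
      by (rule sum.cong) (auto simp: PL i)
    also have "\<dots> = laplacian n F $$ (p i, p j)" by (rule sum_ind_r) (rule pi[OF j])
    also have "\<dots> = laplacian n E $$ (i, j)" by (rule ent[OF i j])
    finally show "laplacian n E $$ (i, j) = (P * laplacian n F * Q) $$ (i, j)" by simp
  qed (use P Q in auto)
  have PQ: "P * Q = 1\<^sub>m n"
  proof (rule eq_matI)
    fix i j assume "i < dim_row (1\<^sub>m n :: real mat)" "j < dim_col (1\<^sub>m n :: real mat)"
    then have i: "i < n" and j: "j < n" by auto
    have "(P * Q) $$ (i, j) = (\<Sum>a\<in>{0..<n}. (if a = p i then 1 else 0) * (if a = p j then 1 else 0))"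
      using i j by (simp add: P_def Q_def scalar_prod_def)
    also have "\<dots> = (if p i = p j then 1 else 0)" by (rule sum_ind_l) (rule pi[OF i])
    also have "\<dots> = (if i = j then 1 else 0)" using inj i j by (auto dest: inj_onD)
    finally show "(P * Q) $$ (i, j) = 1\<^sub>m n $$ (i, j)" using i j by simp
  qed (use P Q in auto)
  have QP: "Q * P = 1\<^sub>m n" by (rule mat_mult_left_right_inverse[OF P Q PQ])
  have "similar_mat (laplacian n E) (laplacian n F)"
    by (rule similar_matI[of _ _ P Q n]) (use P Q LE LF PQ QP eqL in auto)
  then show ?thesis by (rule char_poly_similar)
qed

lemma ne2: assumes G: "simple_graph n E"
  shows "card {(i, j). i < n \<and> j < n \<and> E i j} = 2 * num_edges n E"
proof -
  let ?S = "{(i, j). i < j \<and> j < n \<and> E i j}"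
  have sym: "\<And>i j. E i j \<Longrightarrow> E j i \<and> i \<noteq> j \<and> i < n \<and> j < n" using G unfolding simple_graph_def by blast
  have eq: "{(i, j). i < n \<and> j < n \<and> E i j} = ?S \<union> prod.swap ` ?S"
  proof (intro equalityI subsetI)
    fix x assume "x \<in> {(i, j). i < n \<and> j < n \<and> E i j}"
    then obtain i j where x: "x = (i, j)" "i < n" "j < n" "E i j" by blast
    show "x \<in> ?S \<union> prod.swap ` ?S"
    proof (cases "i < j")
      case True then show ?thesis using x by auto
    next
      case False
      then have "j < i" using sym[OF x(4)] by auto
      then have "(j, i) \<in> ?S" using x sym[OF x(4)] by auto
      then show ?thesis using x by (auto intro: image_eqI[of _ _ "(j, i)"])
    qed
  next
    fix x assume "x \<in> ?S \<union> prod.swap ` ?S"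
    then show "x \<in> {(i, j). i < n \<and> j < n \<and> E i j}" using sym by auto
  qed
  have fS: "finite ?S" by (rule finite_subset[of _ "{..<n} \<times> {..<n}"]) auto
  have dis: "?S \<inter> prod.swap ` ?S = {}" by auto
  have "card (?S \<union> prod.swap ` ?S) = card ?S + card (prod.swap ` ?S)"
    by (rule card_Un_disjoint) (use fS dis in auto)
  also have "card (prod.swap ` ?S) = card ?S" by (rule card_image) (auto simp: inj_on_def)
  finally show ?thesis unfolding eq num_edges_def by simp
qed

lemma ne_iso_graph: assumes bij: "bij_betw p {0..<n} {0..<n}"
  and rel: "\<forall>i<n. \<forall>j<n. E i j \<longleftrightarrow> F (p i) (p j)"
  and GE: "simple_graph n E" and GF: "simple_graph n F"
  shows "num_edges n E = num_edges n F"
proof -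
  have pi: "\<And>i. i < n \<Longrightarrow> p i < n" using bij by (auto dest: bij_betwE)
  have inj: "inj_on p {0..<n}" using bij by (rule bij_betw_imp_inj_on)
  have surj: "p ` {0..<n} = {0..<n}" using bij by (rule bij_betw_imp_surj_on)
  let ?f = "\<lambda>(i, j). (p i, p j)"
  let ?A = "{(i, j). i < n \<and> j < n \<and> E i j}"
  have eq: "{(i, j). i < n \<and> j < n \<and> F i j} = ?f ` ?A"
  proof (intro equalityI subsetI)
    fix x assume "x \<in> {(i, j). i < n \<and> j < n \<and> F i j}"
    then obtain a b where x: "x = (a, b)" "a < n" "b < n" "F a b" by blast
    from x surj obtain i where i: "i < n" "a = p i" by (metis atLeastLessThan_iff imageE zero_le)
    from x surj obtain j where j: "j < n" "b = p j" by (metis atLeastLessThan_iff imageE zero_le)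
    have "(i, j) \<in> ?A" using i j x rel by auto
    then show "x \<in> ?f ` ?A" using x i j by (auto intro: image_eqI[of _ _ "(i, j)"])
  next
    fix x assume "x \<in> ?f ` ?A"
    then show "x \<in> {(i, j). i < n \<and> j < n \<and> F i j}" using rel pi by auto
  qed
  have "inj_on ?f ?A" using inj by (auto simp: inj_on_def)
  then have "card {(i, j). i < n \<and> j < n \<and> F i j} = card ?A" unfolding eq by (rule card_image)
  then show ?thesis using ne2[OF GE] ne2[OF GF] by simp
qed


lemma eig_real: fixes A :: "real mat" and a :: complex
  assumes A: "A \<in> carrier_mat n n" and sym: "\<forall>i<n. \<forall>j<n. A $$ (i, j) = A $$ (j, i)"
    and ev: "eigenvector (map_mat complex_of_real A) v a"
  shows "Im a = 0"
proof -
  let ?B = "map_mat complex_of_real A"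
  have v: "v \<in> carrier_vec n" and v0: "v \<noteq> 0\<^sub>v n" and Bv: "?B *\<^sub>v v = a \<cdot>\<^sub>v v"
    using ev A unfolding eigenvector_def by auto
  have Bvi: "(\<Sum>j<n. complex_of_real (A $$ (i, j)) * v $ j) = a * v $ i" if i: "i < n" for i
  proof -
    have e2: "(?B *\<^sub>v v) $ i = (\<Sum>j<n. complex_of_real (A $$ (i, j)) * v $ j)"
      using i A v by (simp add: scalar_prod_def atLeast0LessThan)
    have e1: "(?B *\<^sub>v v) $ i = a * v $ i" unfolding Bv using i v by simp
    show ?thesis by (subst e2[symmetric]) (rule e1)
  qed
  define s where "s = (\<Sum>i<n. \<Sum>j<n. cnj (v $ i) * complex_of_real (A $$ (i, j)) * v $ j)"
  define r where "r = (\<Sum>i<n. (cmod (v $ i))\<^sup>2)"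
  have s1: "s = a * complex_of_real r"
  proof -
    have "s = (\<Sum>i<n. cnj (v $ i) * (\<Sum>j<n. complex_of_real (A $$ (i, j)) * v $ j))"
      unfolding s_def by (simp add: sum_distrib_left mult.assoc)
    also have "\<dots> = (\<Sum>i<n. cnj (v $ i) * (a * v $ i))"
      by (rule sum.cong) (simp_all add: Bvi)
    also have "\<dots> = (\<Sum>i<n. a * (v $ i * cnj (v $ i)))"
      by (simp add: ac_simps)
    also have "\<dots> = (\<Sum>i<n. a * complex_of_real ((cmod (v $ i))\<^sup>2))"
      by (rule sum.cong[OF refl]) (simp only: complex_norm_square)
    also have "\<dots> = a * (\<Sum>i<n. complex_of_real ((cmod (v $ i))\<^sup>2))"
      by (simp only: sum_distrib_left)
    also have "(\<Sum>i<n. complex_of_real ((cmod (v $ i))\<^sup>2)) = complex_of_real r"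
      unfolding r_def by (simp only: of_real_sum)
    finally show ?thesis .
  qed
  have s2: "cnj s = s"
  proof -
    have "cnj s = (\<Sum>i<n. \<Sum>j<n. v $ i * complex_of_real (A $$ (i, j)) * cnj (v $ j))"
      unfolding s_def by (simp add: cnj_sum)
    also have "\<dots> = (\<Sum>j<n. \<Sum>i<n. v $ i * complex_of_real (A $$ (i, j)) * cnj (v $ j))"
      by (rule sum.swap)
    also have "\<dots> = s" unfolding s_def
      by (rule sum.cong[OF refl], rule sum.cong[OF refl]) (use sym in \<open>auto simp: ac_simps\<close>)
    finally show ?thesis .
  qed
  have rpos: "r > 0"
  proof -
    obtain i where i: "i < n" "v $ i \<noteq> 0"
    proof (rule ccontr)
      assume "\<not> thesis"
      then have "\<forall>i<n. v $ i = 0" using that by blast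
      then have "v = 0\<^sub>v n" using v by (intro eq_vecI) auto
      with v0 show False by simp
    qed
    have "(cmod (v $ i))\<^sup>2 \<le> r" unfolding r_def
      by (rule member_le_sum) (use i in auto)
    moreover have "(cmod (v $ i))\<^sup>2 > 0" using i by simp
    ultimately show ?thesis by linarith
  qed
  have "Im s = 0" using s2 by (metis complex_cnj_cancel_iff complex_cnj_zero_iff Reals_cnj_iff complex_is_Real_iff)
  then have "Im a * r = 0" using s1 by simp
  then show ?thesis using rpos by simp
qed

lemma real_rooted: fixes A :: "real mat"
  assumes A: "A \<in> carrier_mat n n" and sym: "\<forall>i<n. \<forall>j<n. A $$ (i, j) = A $$ (j, i)"
  shows "\<exists>es. char_poly A = (\<Prod>e\<leftarrow>es. [:- e, 1:]) \<and> length es = n"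
proof -
  let ?B = "map_mat complex_of_real A"
  have B: "?B \<in> carrier_mat n n" using A by simp
  obtain as where cB: "char_poly ?B = (\<Prod>a\<leftarrow>as. [:- a, 1:])" and las: "length as = n"
    using char_poly_factorized[OF B] by blast
  have im: "Im a = 0" if a: "a \<in> set as" for a
  proof -
    have "poly (char_poly ?B) a = 0" unfolding cB using a
      by (auto simp: poly_prod_list prod_list_zero_iff)
    then have "eigenvalue ?B a" using eigenvalue_root_char_poly[OF B] by simp
    then obtain v where "eigenvector ?B v a" unfolding eigenvalue_def by blast
    then show ?thesis by (rule eig_real[OF A sym])
  qed
  have hom: "char_poly ?B = map_poly of_real (char_poly A)"
    using of_real_hom.char_poly_hom[OF A] by simp
  have prodeq: "(\<Prod>a\<leftarrow>bs. complex_of_real x - a) = complex_of_real (\<Prod>a\<leftarrow>bs. x - Re a)"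
    if "\<forall>a\<in>set bs. Im a = 0" for bs x
    using that by (induction bs) (auto simp: complex_eq_iff)
  have "char_poly A = (\<Prod>e\<leftarrow>map Re as. [:- e, 1:])"
  proof (rule poly_eqI_cofinite[where c=0])
    fix x :: real
    have "complex_of_real (poly (char_poly A) x) = poly (char_poly ?B) (complex_of_real x)"
      unfolding hom of_real_hom.poly_map_poly ..
    also have "\<dots> = (\<Prod>a\<leftarrow>as. complex_of_real x - a)" unfolding cB by (simp add: poly_prod_list o_def)
    also have "\<dots> = complex_of_real (\<Prod>a\<leftarrow>as. x - Re a)" using prodeq im by blast
    also have "(\<Prod>a\<leftarrow>as. x - Re a) = poly (\<Prod>e\<leftarrow>map Re as. [:- e, 1:]) x"
      by (simp add: poly_prod_list o_def)
    finally show "poly (char_poly A) x = poly (\<Prod>e\<leftarrow>map Re as. [:- e, 1:]) x" by simp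
  qed
  then show ?thesis using las by (intro exI[of _ "map Re as"]) simp
qed

lemma lap_sym: "simple_graph n E \<Longrightarrow> \<forall>i<n. \<forall>j<n. laplacian n E $$ (i, j) = laplacian n E $$ (j, i)"
  unfolding simple_graph_def by (auto simp: lap_index)


definition tk :: "real multiset \<Rightarrow> nat \<Rightarrow> real" where
  "tk M k = sum_list (take k (rev (sorted_list_of_multiset M)))"

lemma rev_sorted_mset: "sorted_wrt (\<ge>) xs \<Longrightarrow> rev (sorted_list_of_multiset (mset xs)) = (xs :: real list)"
proof -
  assume s: "sorted_wrt (\<ge>) xs"
  have "sorted (rev xs)" using s by (simp add: sorted_wrt_rev)
  then have "sort xs = rev xs" by (intro properties_for_sort) auto
  then show ?thesis by (simp add: sorted_list_of_multiset_mset)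
qed

lemma rsl_props: "sorted_wrt (\<ge>) (rev (sorted_list_of_multiset M)) \<and> mset (rev (sorted_list_of_multiset M)) = (M :: real multiset)"
  by (simp add: sorted_wrt_rev)

lemma notin_sub: assumes "N \<subseteq># add_mset x M" "x \<notin># N" shows "N \<subseteq># M"
proof (rule mset_subset_eqI)
  fix y
  have c: "count N y \<le> count (add_mset x M) y" using assms(1) by (rule mset_subset_eq_count)
  show "count N y \<le> count M y"
  proof (cases "y = x")
    case True then show ?thesis using assms(2) by (simp add: not_in_iff)
  next
    case False then show ?thesis using c by simp
  qed
qed

lemma sub_le_take: "sorted_wrt (\<ge>) xs \<Longrightarrow> N \<subseteq># mset xs \<Longrightarrow> sum_mset N \<le> sum_list (take (size N) (xs :: real list))"
proof (induction xs arbitrary: N)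
  case Nil then show ?case by simp
next
  case (Cons x xs)
  have sx: "sorted_wrt (\<ge>) xs" and xge: "\<forall>y\<in>set xs. y \<le> x" using Cons.prems by auto
  show ?case
  proof (cases "x \<in># N")
    case True
    from True obtain N' where N: "N = add_mset x N'" by (blast dest: multi_member_split)
    have "add_mset x N' \<subseteq># add_mset x (mset xs)" using Cons.prems(2) N by simp
    then have "N' \<subseteq># mset xs" by (simp only: mset_subset_eq_add_mset_cancel)
    then have ih: "sum_mset N' \<le> sum_list (take (size N') xs)" by (rule Cons.IH[OF sx])
    have "sum_mset N = x + sum_mset N'" using N by simp
    moreover have "sum_list (take (size N) (x # xs)) = x + sum_list (take (size N') xs)" using N by simp
    ultimately show ?thesis using ih by linarith
  next
    case False
    have sub: "N \<subseteq># mset xs" by (rule notin_sub[of N x]) (use Cons.prems(2) False in simp_all)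
    have ih: "sum_mset N \<le> sum_list (take (size N) xs)" by (rule Cons.IH[OF sx sub])
    show ?thesis
    proof (cases "size N")
      case 0 then show ?thesis by simp
    next
      case (Suc k)
      have "size N \<le> size (mset xs)" by (rule size_mset_mono[OF sub])
      then have k: "k < length xs" using Suc by simp
      have "sum_list (take (size N) xs) = sum_list (take k xs) + xs ! k"
        using k Suc by (simp add: take_Suc_conv_app_nth)
      also have "\<dots> \<le> sum_list (take k xs) + x" using xge k by simp
      finally show ?thesis using ih Suc by simp
    qed
  qed
qed

lemma tk_ge: "N \<subseteq># M \<Longrightarrow> sum_mset N \<le> tk M (size N)"
  unfolding tk_def using sub_le_take[of "rev (sorted_list_of_multiset M)" N] rsl_props[of M] by simp

lemma tk_split: fixes A B :: "real multiset"
  shows "\<exists>k1 k2. k1 \<le> size A \<and> k2 \<le> size B \<and> k1 + k2 \<le> k \<and> tk (A + B) k \<le> tk A k1 + tk B k2"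
proof -
  define xs where "xs = rev (sorted_list_of_multiset (A + B))"
  define N where "N = mset (take k xs)"
  have mx: "mset xs = A + B" unfolding xs_def by simp
  have NAB: "N \<subseteq># A + B" unfolding N_def mx[symmetric]
    by (metis append_take_drop_id mset_append mset_subset_eq_add_left)
  define N1 where "N1 = N \<inter># A"
  define N2 where "N2 = N - N1"
  have N1A: "N1 \<subseteq># A" unfolding N1_def by simp
  have N2B: "N2 \<subseteq># B"
  proof (rule mset_subset_eqI)
    fix y
    have "count N y \<le> count A y + count B y" using NAB by (metis count_union mset_subset_eq_count)
    then show "count N2 y \<le> count B y" unfolding N2_def N1_def by simp
  qed
  have NN: "N = N1 + N2" by (rule multiset_eqI) (simp add: N1_def N2_def)
  have "tk (A + B) k = sum_mset N" unfolding tk_def N_def xs_def by (simp add: sum_mset_sum_list)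
  also have "\<dots> = sum_mset N1 + sum_mset N2" unfolding NN by simp
  also have "\<dots> \<le> tk A (size N1) + tk B (size N2)" using tk_ge[OF N1A] tk_ge[OF N2B] by simp
  finally have le: "tk (A + B) k \<le> tk A (size N1) + tk B (size N2)" .
  have "size N1 + size N2 = size N" unfolding NN by simp
  also have "size N \<le> k" unfolding N_def by simp
  finally have "size N1 + size N2 \<le> k" .
  moreover have "size N1 \<le> size A" by (rule size_mset_mono[OF N1A])
  moreover have "size N2 \<le> size B" by (rule size_mset_mono[OF N2B])
  ultimately show ?thesis using le by (intro exI[of _ "size N1"] exI[of _ "size N2"]) simp
qed

lemma tk_0[simp]: "tk M 0 = 0" unfolding tk_def by simp

lemma sum_take_nth: "k \<le> length xs \<Longrightarrow> (\<Sum>i = 1..k. xs ! (i - 1)) = sum_list (take k (xs :: real list))"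
proof (induction k)
  case 0 then show ?case by simp
next
  case (Suc k)
  then have "(\<Sum>i = 1..Suc k. xs ! (i - 1)) = sum_list (take k xs) + xs ! k" by simp
  also have "\<dots> = sum_list (take (Suc k) xs)" using Suc.prems by (simp add: take_Suc_conv_app_nth)
  finally show ?case .
qed

lemma lap_sum_tk: "size (proots (char_poly (laplacian n E))) = n \<Longrightarrow> k \<le> n \<Longrightarrow>
   lap_sum n E k = tk (proots (char_poly (laplacian n E))) k"
  unfolding lap_sum_def lap_eig_def tk_def lap_eigs_def
  by (rule sum_take_nth) (metis length_rev mset_sorted_list_of_multiset size_mset)


definition spec :: "nat \<Rightarrow> (nat \<Rightarrow> nat \<Rightarrow> bool) \<Rightarrow> real multiset" where
  "spec n E = proots (char_poly (laplacian n E))"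

lemma prod_lin_nz: "(\<Prod>e\<leftarrow>es. [:- e, 1:]) \<noteq> (0 :: real poly)"
  by (subst prod_list_zero_iff) auto

lemma proots_lin: "proots (\<Prod>e\<leftarrow>es. [:- e, 1:]) = mset (es :: real list)"
proof (induction es)
  case Nil then show ?case by simp
next
  case (Cons e es)
  have "proots ([:- e, 1:] * (\<Prod>e\<leftarrow>es. [:- e, 1:])) = proots [:- e, 1:] + proots (\<Prod>e\<leftarrow>es. [:- e, 1:])"
    by (rule proots_mult) (auto simp: prod_lin_nz)
  then show ?case using Cons by (simp add: proots_linear_factor)
qed

lemma spec_size: assumes "simple_graph n E" shows "size (spec n E) = n"
proof -
  obtain es where "char_poly (laplacian n E) = (\<Prod>e\<leftarrow>es. [:- e, 1:])" "length es = n"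
    using real_rooted[OF lap_carrier lap_sym[OF assms]] by blast
  then show ?thesis unfolding spec_def by (simp add: proots_lin)
qed

lemma cp_nz: "char_poly (laplacian n E) \<noteq> 0"
  using degree_monic_char_poly[OF lap_carrier[of n E]] by auto

lemma spec_thr: assumes v: "valid n cs" shows "spec n (thrL n cs) = mset (map real (eigsL n cs))"
proof -
  have "(\<Prod>e\<leftarrow>eigsL n cs. [:- real e, 1:]) = (\<Prod>e\<leftarrow>map real (eigsL n cs). [:- e, 1:])"
    by (simp add: o_def)
  then show ?thesis unfolding spec_def cp_thr[OF v] using proots_lin[of "map real (eigsL n cs)"] by simp
qed

lemma lap_sum_thr: assumes v: "valid n cs" and k: "k \<le> n"
  shows "lap_sum n (thrL n cs) k = real (Fk k cs)"
proof -
  have P: "length (eigsL n cs) = n" "sorted_wrt (\<ge>) (eigsL n cs)" "sum_list (take k (eigsL n cs)) = Fk k cs"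
    using eigsL_props[OF v] k by auto
  have sz: "size (proots (char_poly (laplacian n (thrL n cs)))) = n"
    using spec_thr[OF v] P(1) unfolding spec_def by simp
  have so: "sorted_wrt (\<ge>) (map real (eigsL n cs))" using P(2) by (simp add: sorted_wrt_map)
  have "lap_sum n (thrL n cs) k = tk (mset (map real (eigsL n cs))) k"
    using lap_sum_tk[OF sz k] spec_thr[OF v] unfolding spec_def by simp
  also have "\<dots> = sum_list (take k (map real (eigsL n cs)))"
    unfolding tk_def rev_sorted_mset[OF so] ..
  also have "\<dots> = real (sum_list (take k (eigsL n cs)))"
  proof -
    have "sum_list (map real xs) = real (sum_list xs)" for xs by (induction xs) auto
    then show ?thesis by (simp add: take_map)
  qed
  finally show ?thesis using P(3) by simp
qed

definition STDL :: "nat \<Rightarrow> (nat \<Rightarrow> nat \<Rightarrow> bool) \<Rightarrow> bool" where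
  "STDL n E \<longleftrightarrow> (\<forall>k\<le>n. \<exists>cs. valid n cs \<and> sum_list cs = num_edges n E \<and> tk (spec n E) k \<le> real (Fk k cs))"

lemma STD_STDL: assumes G: "simple_graph n E" and S: "spectrally_threshold_dominated n E"
  shows "STDL n E"
proof -
  have pos: "\<exists>cs. valid n cs \<and> sum_list cs = num_edges n E \<and> tk (spec n E) k \<le> real (Fk k cs)"
    if k: "1 \<le> k" "k \<le> n" for k
  proof -
    have kk: "k \<in> {1..n}" using k by simp
    from S kk obtain T where T: "threshold n T" "num_edges n T = num_edges n E" "lap_sum n T k \<ge> lap_sum n E k"
      unfolding spectrally_threshold_dominated_def by blast
    from thr_rep[OF T(1)] obtain cs where v: "valid n cs" and Tcs: "T = thrL n cs" by blast
    have "tk (spec n E) k = lap_sum n E k"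
      using lap_sum_tk[OF spec_size[OF G, unfolded spec_def] k(2)] unfolding spec_def by simp
    also have "\<dots> \<le> lap_sum n T k" by (rule T(3))
    also have "\<dots> = real (Fk k cs)" unfolding Tcs by (rule lap_sum_thr[OF v k(2)])
    finally show ?thesis using v T(2) ne_thr[OF v] Tcs by auto
  qed
  show ?thesis unfolding STDL_def
  proof (intro allI impI)
    fix k assume k: "k \<le> n"
    show "\<exists>cs. valid n cs \<and> sum_list cs = num_edges n E \<and> tk (spec n E) k \<le> real (Fk k cs)"
    proof (cases "k = 0")
      case False then show ?thesis using pos k by simp
    next
      case True
      show ?thesis
      proof (cases "n = 0")
        case True
        have "num_edges n E = 0" unfolding num_edges_def using True by simp
        then show ?thesis using \<open>k = 0\<close> by (intro exI[of _ "[]"]) (simp add: valid_def)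
      next
        case False
        then obtain cs where "valid n cs" "sum_list cs = num_edges n E" using pos[of 1] by auto
        then show ?thesis using \<open>k = 0\<close> by (intro exI[of _ cs]) simp
      qed
    qed
  qed
qed

lemma STDL_union: assumes G1: "simple_graph n1 E1" and G2: "simple_graph n2 E2"
  and S1: "STDL n1 E1" and S2: "STDL n2 E2"
  shows "STDL (n1 + n2) (uE n1 E1 E2)"
  unfolding STDL_def
proof (intro allI impI)
  fix k assume k: "k \<le> n1 + n2"
  have sp: "spec (n1 + n2) (uE n1 E1 E2) = spec n1 E1 + spec n2 E2"
    unfolding spec_def cp_union[OF G1 G2] by (rule proots_mult[OF cp_nz cp_nz])
  obtain k1 k2 where kk: "k1 \<le> size (spec n1 E1)" "k2 \<le> size (spec n2 E2)" "k1 + k2 \<le> k"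
    and le: "tk (spec n1 E1 + spec n2 E2) k \<le> tk (spec n1 E1) k1 + tk (spec n2 E2) k2"
    using tk_split by blast
  have k1: "k1 \<le> n1" using kk(1) spec_size[OF G1] by simp
  have k2: "k2 \<le> n2" using kk(2) spec_size[OF G2] by simp
  obtain cs1 where c1: "valid n1 cs1" "sum_list cs1 = num_edges n1 E1" "tk (spec n1 E1) k1 \<le> real (Fk k1 cs1)"
    using S1 k1 unfolding STDL_def by blast
  obtain cs2 where c2: "valid n2 cs2" "sum_list cs2 = num_edges n2 E2" "tk (spec n2 E2) k2 \<le> real (Fk k2 cs2)"
    using S2 k2 unfolding STDL_def by blast
  have "Fk k1 cs1 + Fk k2 cs2 \<le> Fk (k1 + k2) (addl cs1 cs2)" by (rule Fk_super)
  also have "\<dots> \<le> Fk k (addl cs1 cs2)" by (rule Fk_mono_k[OF kk(3)])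
  finally have F: "real (Fk k1 cs1) + real (Fk k2 cs2) \<le> real (Fk k (addl cs1 cs2))" by linarith
  have "tk (spec (n1 + n2) (uE n1 E1 E2)) k \<le> real (Fk k (addl cs1 cs2))"
    unfolding sp using le c1(3) c2(3) F by linarith
  moreover have "valid (n1 + n2) (addl cs1 cs2)" by (rule valid_addl[OF c1(1) c2(1)])
  moreover have "sum_list (addl cs1 cs2) = num_edges (n1 + n2) (uE n1 E1 E2)"
    unfolding sum_addl ne_union[OF G1 G2] c1(2) c2(2) ..
  ultimately show "\<exists>cs. valid (n1 + n2) cs \<and> sum_list cs = num_edges (n1 + n2) (uE n1 E1 E2) \<and>
      tk (spec (n1 + n2) (uE n1 E1 E2)) k \<le> real (Fk k cs)" by (intro exI[of _ "addl cs1 cs2"] conjI)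
qed

lemma STDL_list: "\<forall>H\<in>set Gs. simple_graph (fst H) (snd H) \<and> spectrally_threshold_dominated (fst H) (snd H) \<Longrightarrow>
  simple_graph (fst (disj_union_list Gs)) (snd (disj_union_list Gs)) \<and> STDL (fst (disj_union_list Gs)) (snd (disj_union_list Gs))"
proof (induction Gs)
  case Nil
  have "simple_graph 0 (\<lambda>_ _. False)" unfolding simple_graph_def by simp
  moreover have "STDL 0 (\<lambda>_ _. False)" unfolding STDL_def
    by (auto intro!: exI[of _ "[]"] simp: valid_def num_edges_def)
  ultimately show ?case unfolding disj_union_list_def by simp
next
  case (Cons G Gs)
  obtain n1 E1 where G: "G = (n1, E1)" by (cases G)
  obtain n2 E2 where R: "disj_union_list Gs = (n2, E2)" by (cases "disj_union_list Gs")
  have IH: "simple_graph n2 E2" "STDL n2 E2" using Cons R by auto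
  have H1: "simple_graph n1 E1" "spectrally_threshold_dominated n1 E1" using Cons.prems G by auto
  have H: "simple_graph n1 E1" "STDL n1 E1" using H1 STD_STDL[OF H1] by auto
  have eq: "disj_union_list (G # Gs) = (n1 + n2, uE n1 E1 E2)"
    unfolding disj_union_list_def using R G by (simp add: disj_union_list_def disj_union_eq)
  show ?case unfolding eq using simple_union[OF H(1) IH(1)] STDL_union[OF H(1) IH(1) H(2) IH(2)] by simp
qed

theorem lemma3:
  fixes Gs :: "graph list" and n :: nat and E :: "nat \<Rightarrow> nat \<Rightarrow> bool" and k :: nat
  assumes comps: "\<forall>H \<in> set Gs. simple_graph (fst H) (snd H) \<and>
                     spectrally_threshold_dominated (fst H) (snd H)"
    and G: "simple_graph n E"
    and union: "graph_iso (n, E) (disj_union_list Gs)"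
    and k: "k \<in> {1..n}"
  shows "\<exists>T. threshold n T \<and> num_edges n T = num_edges n E \<and>
             lap_sum n T k \<ge> lap_sum n E k"
proof -
  obtain m F where U: "disj_union_list Gs = (m, F)" by (cases "disj_union_list Gs")
  have SU: "simple_graph m F" "STDL m F" using STDL_list[OF comps] U by auto
  from union U have mn: "m = n" unfolding graph_iso_def by simp
  have "\<exists>p. bij_betw p {0..<n} {0..<n} \<and> (\<forall>i<n. \<forall>j<n. E i j \<longleftrightarrow> F (p i) (p j))"
    using union unfolding U mn graph_iso_def fst_conv snd_conv by (elim conjE)
  then obtain p where bij: "bij_betw p {0..<n} {0..<n}"
    and rel: "\<forall>i<n. \<forall>j<n. E i j \<longleftrightarrow> F (p i) (p j)" by blast
  have sp: "spec n E = spec n F" unfolding spec_def cp_iso[OF bij rel] ..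
  have ne: "num_edges n E = num_edges n F" by (rule ne_iso_graph[OF bij rel G SU(1)[unfolded mn]])
  have kn: "k \<le> n" using k by simp
  obtain cs where v: "valid n cs" and s: "sum_list cs = num_edges n F" and t: "tk (spec n F) k \<le> real (Fk k cs)"
    using SU(2) kn unfolding STDL_def mn by blast
  have "lap_sum n E k = tk (spec n E) k"
    using lap_sum_tk[OF spec_size[OF G, unfolded spec_def] kn] unfolding spec_def by simp
  also have "\<dots> \<le> real (Fk k cs)" using t sp by simp
  also have "\<dots> = lap_sum n (thrL n cs) k" by (rule lap_sum_thr[OF v kn, symmetric])
  finally have "lap_sum n E k \<le> lap_sum n (thrL n cs) k" .
  moreover have "threshold n (thrL n cs)" by (rule thr_valid[OF v])
  moreover have "num_edges n (thrL n cs) = num_edges n E" using ne_thr[OF v] s ne by simp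
  ultimately show ?thesis by (intro exI[of _ "thrL n cs"] conjI)
qed


end
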